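(* Let $\underline\phi\le\overline\phi$ and $\underline\psi\le\overline\psi$ be functions on $[0,1]$ satisfying (P1)–(P3). Then the pair $(C^{\mathrm M}_{\underline\phi,\underline\psi},C^{\mathrm M}_{\overline\phi,\overline\psi})$ is an imprecise copula which is coherent, i.e. with $\mathcal C=\{C: C \text{ a copula}, C^{\mathrm M}_{\underline\phi,\underline\psi}\le C\le C^{\mathrm M}_{\overline\phi,\overline\psi}\}$ one has $C^{\mathrm M}_{\underline\phi,\underline\psi}=\inf_{C\in\mathcal C}C$ and $C^{\mathrm M}_{\overline\phi,\overline\psi}=\sup_{C\in\mathcal C}C$ pointwise.
   Context: (P1) $\phi,\psi$ non-decreasing; (P2) $\phi(0)=\psi(0)=0$, $\phi(1)=\psi(1)=1$; (P3) $\phi(u)/u$, $\psi(v)/v$ non-increasing on $(0,1]$. $C^{\mathrm M}_{\phi,\psi}(u,v)=uv\min\{\phi(u)/u,\psi(v)/v\}$ for $uv>0$ and $0$ otherwise. A copula is $C:[0,1]^2\to[0,1]$ with $C(u,0)=C(0,v)=0$, $C(u,1)=u$, $C(1,v)=v$, and $C(u_2,v_2)-C(u_1,v_2)-C(u_2,v_1)+C(u_1,v_1)\ge0$ for $u_1\le u_2$, $v_1\le v_2$. An imprecise copula is a pair $(\underline C,\overline C)$ of maps $[0,1]^2\to[0,1]$ both satisfying the boundary conditions of a copula and, for all $u_1\le u_2$, $v_1\le v_2$: $\underline C(u_2,v_2)+\overline C(u_1,v_1)-\underline C(u_2,v_1)-\underline C(u_1,v_2)\ge0$; $\overline C(u_2,v_2)+\underline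 C(u_1,v_1)-\underline C(u_2,v_1)-\underline C(u_1,v_2)\ge0$; $\overline C(u_2,v_2)+\overline C(u_1,v_1)-\overline C(u_2,v_1)-\underline C(u_1,v_2)\ge0$; $\overline C(u_2,v_2)+\overline C(u_1,v_1)-\underline C(u_2,v_1)-\overline C(u_1,v_2)\ge0$. *)

theory Defs
  imports "HOL-Analysis.Analysis"
begin

definition P123 :: "(real \<Rightarrow> real) \<Rightarrow> bool" where
  "P123 f \<longleftrightarrow>
     (\<forall>x\<in>{0..1}. \<forall>y\<in>{0..1}. x \<le> y \<longrightarrow> f x \<le> f y) \<and>
     f 0 = 0 \<and> f 1 = 1 \<and>
     (\<forall>x\<in>{0<..1}. \<forall>y\<in>{0<..1}. x \<le> y \<longrightarrow> f y / y \<le> f x / x)"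

definition CM :: "(real \<Rightarrow> real) \<Rightarrow> (real \<Rightarrow> real) \<Rightarrow> real \<Rightarrow> real \<Rightarrow> real" where
  "CM \<phi> \<psi> u v = (if u * v > 0 then u * v * min (\<phi> u / u) (\<psi> v / v) else 0)"

definition copula_boundary :: "(real \<Rightarrow> real \<Rightarrow> real) \<Rightarrow> bool" where
  "copula_boundary C \<longleftrightarrow>
     (\<forall>u\<in>{0..1}. \<forall>v\<in>{0..1}. C u v \<in> {0..1}) \<and>
     (\<forall>u\<in>{0..1}. C u 0 = 0 \<and> C 0 u = 0 \<and> C u 1 = u \<and> C 1 u = u)"

definition copula :: "(real \<Rightarrow> real \<Rightarrow> real) \<Rightarrow> bool" where
  "copula C \<longleftrightarrow> copula_boundary C \<and>
     (\<forall>u1\<in>{0..1}. \<forall>u2\<in>{0..1}. \<forall>v1\<in>{0..1}. \<forall>v2\<in>{0..1}.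
        u1 \<le> u2 \<longrightarrow> v1 \<le> v2 \<longrightarrow> C u2 v2 - C u1 v2 - C u2 v1 + C u1 v1 \<ge> 0)"

definition imprecise_copula :: "(real \<Rightarrow> real \<Rightarrow> real) \<Rightarrow> (real \<Rightarrow> real \<Rightarrow> real) \<Rightarrow> bool" where
  "imprecise_copula L U \<longleftrightarrow> copula_boundary L \<and> copula_boundary U \<and>
     (\<forall>u1\<in>{0..1}. \<forall>u2\<in>{0..1}. \<forall>v1\<in>{0..1}. \<forall>v2\<in>{0..1}.
        u1 \<le> u2 \<longrightarrow> v1 \<le> v2 \<longrightarrow>
          L u2 v2 + U u1 v1 - L u2 v1 - L u1 v2 \<ge> 0 \<and>
          U u2 v2 + L u1 v1 - L u2 v1 - L u1 v2 \<ge> 0 \<and>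
          U u2 v2 + U u1 v1 - U u2 v1 - L u1 v2 \<ge> 0 \<and>
          U u2 v2 + U u1 v1 - L u2 v1 - U u1 v2 \<ge> 0)"

definition copulas_between :: "(real \<Rightarrow> real \<Rightarrow> real) \<Rightarrow> (real \<Rightarrow> real \<Rightarrow> real) \<Rightarrow> (real \<Rightarrow> real \<Rightarrow> real) set" where
  "copulas_between L U = {C. copula C \<and>
     (\<forall>u\<in>{0..1}. \<forall>v\<in>{0..1}. L u v \<le> C u v \<and> C u v \<le> U u v)}"

end

theory Submission
  imports Defs
begin
lemma rect:
  fixes u1 u2 v1 v2 a1 a2 b1 b2 :: real
  assumes u: "0<u1" "u1\<le>u2" and v: "0<v1" "v1\<le>v2"
    and m: "a1 \<le> a2" "b1 \<le> b2" "a1 \<ge> 0" "b1 \<ge> 0"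
    and da: "a2 * u1 \<le> a1 * u2" and db: "b2 * v1 \<le> b1 * v2"
  shows "min (v2*a2) (u2*b2) - min (u1*b2) (v2*a1) - min (v1*a2) (u2*b1) + min (v1*a1) (u1*b1) \<ge> 0"
proof -
  have 1: "(v2-v1)*(a2-a1) \<ge> 0" "(u2-u1)*(b2-b1) \<ge> 0" using u v m by auto
  have c3: "v2*a2 + u1*b1 - u1*b2 - v1*a2 \<ge> 0" if h: "u1*b1 \<le> v1*a1"
  proof -
    have "v1*(u1*(b2-b1)) = u1*(b2* v1) - u1*b1* v1" by (simp add: algebra_simps)
    also have "\<dots> \<le> u1*(b1* v2) - u1*b1* v1" using db u by (simp add: mult_left_mono)
    also have "\<dots> = (u1*b1)*(v2-v1)" by (simp add: algebra_simps)
    also have "\<dots> \<le> (v1*a1)*(v2-v1)" using h v by (simp add: mult_right_mono)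
    also have "\<dots> \<le> (v1*a2)*(v2-v1)" using m v by (simp add: mult_right_mono mult_left_mono)
    finally have "v1*(u1*(b2-b1)) \<le> v1*(a2*(v2-v1))" by (simp add: algebra_simps)
    hence "u1*(b2-b1) \<le> a2*(v2-v1)" using v by simp
    thus ?thesis by (simp add: algebra_simps)
  qed
  have c4: "u2*b2 + v1*a1 - u1*b2 - v1*a2 \<ge> 0" if h: "v1*a1 \<le> u1*b1"
  proof -
    have "u1*(v1*(a2-a1)) = v1*(a2*u1) - v1*a1*u1" by (simp add: algebra_simps)
    also have "\<dots> \<le> v1*(a1*u2) - v1*a1*u1" using da v by (simp add: mult_left_mono)
    also have "\<dots> = (v1*a1)*(u2-u1)" by (simp add: algebra_simps)
    also have "\<dots> \<le> (u1*b1)*(u2-u1)" using h u by (simp add: mult_right_mono)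
    also have "\<dots> \<le> (u1*b2)*(u2-u1)" using m u by (simp add: mult_right_mono mult_left_mono)
    finally have "u1*(v1*(a2-a1)) \<le> u1*(b2*(u2-u1))" by (simp add: algebra_simps)
    hence "v1*(a2-a1) \<le> b2*(u2-u1)" using u by simp
    thus ?thesis by (simp add: algebra_simps)
  qed
  show ?thesis using 1 c3 c4 unfolding min_def by (auto simp: algebra_simps split: if_splits)
qed

lemma P_props:
  assumes "P123 f" "x \<in> {0..1}"
  shows "0 \<le> f x" "f x \<le> 1" "x \<le> f x"
proof -
  have mono: "\<forall>x\<in>{0..1}. \<forall>y\<in>{0..1}. x \<le> y \<longrightarrow> f x \<le> f y" "f 0 = 0" "f 1 = 1"
    and dec: "\<forall>x\<in>{0<..1}. \<forall>y\<in>{0<..1}. x \<le> y \<longrightarrow> f y / y \<le> f x / x"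
    using assms(1) unfolding P123_def by auto
  show "0 \<le> f x" using mono assms(2) by force
  show "f x \<le> 1" using mono assms(2) by force
  show "x \<le> f x"
  proof (cases "x = 0")
    case True thus ?thesis using mono by simp
  next
    case False
    hence "x > 0" using assms(2) by auto
    hence "f 1 / 1 \<le> f x / x" using dec assms(2) by (metis atLeastAtMost_iff greaterThanAtMost_iff order_refl zero_less_one)
    hence "1 \<le> f x / x" using mono(3) by simp
    thus ?thesis using \<open>x > 0\<close> by (simp add: divide_simps)
  qed
qed

lemma CM_min:
  assumes "P123 \<phi>" "P123 \<psi>" "u \<in> {0..1}" "v \<in> {0..1}"
  shows "CM \<phi> \<psi> u v = min (v * \<phi> u) (u * \<psi> v)"
proof (cases "u * v > 0")
  case True
  hence "u > 0" "v > 0" using assms by (auto simp: zero_less_mult_iff)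
  then show ?thesis using True unfolding CM_def
    by (auto simp: min_def divide_simps algebra_simps)
next
  case False
  hence "u = 0 \<or> v = 0" using assms by (auto simp: zero_less_mult_iff)
  moreover have "\<phi> 0 = 0" "\<psi> 0 = 0" using assms unfolding P123_def by auto
  ultimately show ?thesis using False unfolding CM_def by auto
qed

lemma CM_copula:
  assumes P: "P123 \<phi>" "P123 \<psi>"
  shows "copula (CM \<phi> \<psi>)"
proof -
  have mp: "\<forall>x\<in>{0..1}. \<forall>y\<in>{0..1}. x \<le> y \<longrightarrow> \<phi> x \<le> \<phi> y"
    and dp: "\<forall>x\<in>{0<..1}. \<forall>y\<in>{0<..1}. x \<le> y \<longrightarrow> \<phi> y / y \<le> \<phi> x / x"
    and mq: "\<forall>x\<in>{0..1}. \<forall>y\<in>{0..1}. x \<le> y \<longrightarrow> \<psi> x \<le> \<psi> y"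
    and dq: "\<forall>x\<in>{0<..1}. \<forall>y\<in>{0<..1}. x \<le> y \<longrightarrow> \<psi> y / y \<le> \<psi> x / x"
    and z: "\<phi> 0 = 0" "\<psi> 0 = 0" "\<phi> 1 = 1" "\<psi> 1 = 1"
    using P unfolding P123_def by auto
  have bd: "copula_boundary (CM \<phi> \<psi>)"
    unfolding copula_boundary_def
  proof (intro conjI ballI)
    fix u v :: real assume u: "u \<in> {0..1}" and v: "v \<in> {0..1}"
    have "0 \<le> \<phi> u" "\<phi> u \<le> 1" "0 \<le> \<psi> v" "\<psi> v \<le> 1"
      using P_props[OF P(1) u] P_props[OF P(2) v] by auto
    moreover have "v * \<phi> u \<le> 1" using u v calculation by (simp add: mult_le_one)
    moreover have "u * \<psi> v \<le> 1" using u v calculation by (simp add: mult_le_one)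
    ultimately show "CM \<phi> \<psi> u v \<in> {0..1}" using CM_min[OF P u v] u v by auto
  next
    fix u :: real assume u: "u \<in> {0..1}"
    have z01: "(0::real) \<in> {0..1}" "(1::real) \<in> {0..1}" by auto
    have "u \<le> \<phi> u" "u \<le> \<psi> u" using P_props[OF P(1) u] P_props[OF P(2) u] by auto
    then show "CM \<phi> \<psi> u 0 = 0" "CM \<phi> \<psi> 0 u = 0" "CM \<phi> \<psi> u 1 = u" "CM \<phi> \<psi> 1 u = u"
      using CM_min[OF P u z01(1)] CM_min[OF P z01(1) u] CM_min[OF P u z01(2)] CM_min[OF P z01(2) u] z
      by auto
  qed
  have monou: "CM \<phi> \<psi> u1 v \<le> CM \<phi> \<psi> u2 v" if "u1 \<in> {0..1}" "u2 \<in> {0..1}" "v \<in> {0..1}" "u1 \<le> u2" for u1 u2 v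
  proof -
    have "\<phi> u1 \<le> \<phi> u2" using mp that by auto
    hence "v * \<phi> u1 \<le> v * \<phi> u2" using that by (simp add: mult_left_mono)
    moreover have "u1 * \<psi> v \<le> u2 * \<psi> v" using that P_props[OF P(2) that(3)] by (simp add: mult_right_mono)
    ultimately show ?thesis using CM_min[OF P that(1,3)] CM_min[OF P that(2,3)] by linarith
  qed
  have monov: "CM \<phi> \<psi> u v1 \<le> CM \<phi> \<psi> u v2" if "v1 \<in> {0..1}" "v2 \<in> {0..1}" "u \<in> {0..1}" "v1 \<le> v2" for v1 v2 u
  proof -
    have "\<psi> v1 \<le> \<psi> v2" using mq that by auto
    hence "u * \<psi> v1 \<le> u * \<psi> v2" using that by (simp add: mult_left_mono)
    moreover have "v1 * \<phi> u \<le> v2 * \<phi> u" using that P_props[OF P(1) that(3)] by (simp add: mult_right_mono)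
    ultimately show ?thesis using CM_min[OF P that(3,1)] CM_min[OF P that(3,2)] by linarith
  qed
  show ?thesis unfolding copula_def
  proof (intro conjI bd ballI impI)
    fix u1 u2 v1 v2 :: real
    assume u1: "u1 \<in> {0..1}" and u2: "u2 \<in> {0..1}" and v1: "v1 \<in> {0..1}" and v2: "v2 \<in> {0..1}"
      and uu: "u1 \<le> u2" and vv: "v1 \<le> v2"
    show "CM \<phi> \<psi> u2 v2 - CM \<phi> \<psi> u1 v2 - CM \<phi> \<psi> u2 v1 + CM \<phi> \<psi> u1 v1 \<ge> 0"
    proof (cases "u1 = 0 \<or> v1 = 0")
      case True
      then show ?thesis
      proof
        assume "u1 = 0"
        then show ?thesis using bd monov[OF v1 v2 u2 vv] v1 v2 unfolding copula_boundary_def by auto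
      next
        assume "v1 = 0"
        then show ?thesis using bd monou[OF u1 u2 v2 uu] u1 u2 unfolding copula_boundary_def by auto
      qed
    next
      case False
      hence p: "0 < u1" "0 < v1" using u1 v1 by auto
      have m: "\<phi> u1 \<le> \<phi> u2" "\<psi> v1 \<le> \<psi> v2" "\<phi> u1 \<ge> 0" "\<psi> v1 \<ge> 0"
        using mp mq u1 u2 v1 v2 uu vv P_props[OF P(1) u1] P_props[OF P(2) v1] by auto
      have "\<phi> u2 / u2 \<le> \<phi> u1 / u1" using dp p u1 u2 uu by auto
      hence da: "\<phi> u2 * u1 \<le> \<phi> u1 * u2" using p uu by (simp add: divide_simps)
      have "\<psi> v2 / v2 \<le> \<psi> v1 / v1" using dq p v1 v2 vv by auto
      hence db: "\<psi> v2 * v1 \<le> \<psi> v1 * v2" using p vv by (simp add: divide_simps)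
      have "min (v2*\<phi> u2) (u2*\<psi> v2) - min (u1*\<psi> v2) (v2*\<phi> u1) - min (v1*\<phi> u2) (u2*\<psi> v1) + min (v1*\<phi> u1) (u1*\<psi> v1) \<ge> 0"
        by (rule rect[OF p(1) uu p(2) vv m da db])
      then show ?thesis using CM_min[OF P u1 v1] CM_min[OF P u1 v2] CM_min[OF P u2 v1] CM_min[OF P u2 v2]
        by (simp add: min.commute)
    qed
  qed
qed

lemma CM_le:
  assumes "P123 \<phi>l" "P123 \<phi>u" "P123 \<psi>l" "P123 \<psi>u"
    and "\<forall>x\<in>{0..1}. \<phi>l x \<le> \<phi>u x"
    and "\<forall>x\<in>{0..1}. \<psi>l x \<le> \<psi>u x"
    and u: "u \<in> {0..1}" and v: "v \<in> {0..1}"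
  shows "CM \<phi>l \<psi>l u v \<le> CM \<phi>u \<psi>u u v"
proof -
  have "v * \<phi>l u \<le> v * \<phi>u u" using assms by (simp add: mult_left_mono)
  moreover have "u * \<psi>l v \<le> u * \<psi>u v" using assms by (simp add: mult_left_mono)
  ultimately show ?thesis using CM_min[OF assms(1,3) u v] CM_min[OF assms(2,4) u v] by linarith
qed

lemma imprecise_of_copulas:
  assumes L: "copula L" and U: "copula U" and le: "\<forall>u\<in>{0..1}. \<forall>v\<in>{0..1}. L u v \<le> U u v"
  shows "imprecise_copula L U"
  unfolding imprecise_copula_def
proof (intro conjI ballI impI)
  show "copula_boundary L" "copula_boundary U" using L U unfolding copula_def by auto
  fix u1 u2 v1 v2 :: real
  assume h: "u1 \<in> {0..1}" "u2 \<in> {0..1}" "v1 \<in> {0..1}" "v2 \<in> {0..1}" "u1 \<le> u2" "v1 \<le> v2"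
  have rL: "L u2 v2 - L u1 v2 - L u2 v1 + L u1 v1 \<ge> 0" using L h unfolding copula_def by blast
  have rU: "U u2 v2 - U u1 v2 - U u2 v1 + U u1 v1 \<ge> 0" using U h unfolding copula_def by blast
  have "L u1 v1 \<le> U u1 v1" "L u2 v2 \<le> U u2 v2" "L u1 v2 \<le> U u1 v2" "L u2 v1 \<le> U u2 v1"
    using le h by auto
  then show "L u2 v2 + U u1 v1 - L u2 v1 - L u1 v2 \<ge> 0"
    "U u2 v2 + L u1 v1 - L u2 v1 - L u1 v2 \<ge> 0"
    "U u2 v2 + U u1 v1 - U u2 v1 - L u1 v2 \<ge> 0"
    "U u2 v2 + U u1 v1 - L u2 v1 - U u1 v2 \<ge> 0" using rL rU by linarith+
qed

theorem corollary2:
  fixes \<phi>l \<phi>u \<psi>l \<psi>u :: "real \<Rightarrow> real"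
  assumes "P123 \<phi>l" and "P123 \<phi>u" and "P123 \<psi>l" and "P123 \<psi>u"
    and "\<forall>x\<in>{0..1}. \<phi>l x \<le> \<phi>u x"
    and "\<forall>x\<in>{0..1}. \<psi>l x \<le> \<psi>u x"
  shows "imprecise_copula (CM \<phi>l \<psi>l) (CM \<phi>u \<psi>u) \<and>
         copulas_between (CM \<phi>l \<psi>l) (CM \<phi>u \<psi>u) \<noteq> {} \<and>
         (\<forall>u\<in>{0..1}. \<forall>v\<in>{0..1}.
            CM \<phi>l \<psi>l u v = (INF C\<in>copulas_between (CM \<phi>l \<psi>l) (CM \<phi>u \<psi>u). C u v) \<and>
            CM \<phi>u \<psi>u u v = (SUP C\<in>copulas_between (CM \<phi>l \<psi>l) (CM \<phi>u \<psi>u). C u v))"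
proof -
  let ?L = "CM \<phi>l \<psi>l" and ?U = "CM \<phi>u \<psi>u"
  let ?S = "copulas_between ?L ?U"
  have cL: "copula ?L" by (rule CM_copula[OF assms(1,3)])
  have cU: "copula ?U" by (rule CM_copula[OF assms(2,4)])
  have le: "\<forall>u\<in>{0..1}. \<forall>v\<in>{0..1}. ?L u v \<le> ?U u v" using CM_le[OF assms] by blast
  have Lin: "?L \<in> ?S" using cL le unfolding copulas_between_def by auto
  have Uin: "?U \<in> ?S" using cU le unfolding copulas_between_def by auto
  have main: "?L u v = (INF C\<in>?S. C u v) \<and> ?U u v = (SUP C\<in>?S. C u v)"
    if u: "u \<in> {0..1}" and v: "v \<in> {0..1}" for u v
  proof
    have "(INF C\<in>?S. C u v) = ?L u v"
      by (rule cInf_eq_minimum) (use Lin u v in \<open>auto simp: copulas_between_def\<close>)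
    thus "?L u v = (INF C\<in>?S. C u v)" by simp
    have "(SUP C\<in>?S. C u v) = ?U u v"
      by (rule cSup_eq_maximum) (use Uin u v in \<open>auto simp: copulas_between_def\<close>)
    thus "?U u v = (SUP C\<in>?S. C u v)" by simp
  qed
  show ?thesis using imprecise_of_copulas[OF cL cU le] Lin main by blast
qed

end
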